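(* Let $n\ge1$ and $\nu$ a permutation of $[n]$. Then: (1) $\mathrm{WZ}_\nu^{2n}(x)=x$ for all $x\in S_n$. (2) For $1\le j\le n$ let $f_j(x)=1$ if $j\in\{x_1,\dots,x_n\}$ and $0$ otherwise. Then $f_j$ is homomesic for $\mathrm{WZ}_\nu$ on $S_n$ with average $1/2$ along every orbit; hence any real linear combination of the $f_j$ is homomesic.
   Context: $S_n$ is the set of integer $n$-tuples $x=(x_1,\dots,x_n)$ such that for some $0\le k\le n$, $x_1=\dots=x_k=0$ and $1\le x_{k+1}<\dots<x_n\le n$. Winching with zeros on index $i$, $\mathrm{WZ}_i:S_n\to S_n$, changes only the $i$-th coordinate, to: $x_i+1$ if $x_i+1<x_{i+1}$ (where $x_{n+1}:=n+1$); otherwise $x_{i-1}+1$ if $i>1$ and $x_{i-1}>0$; otherwise $0$. $\mathrm{WZ}_\nu=\mathrm{WZ}_{\nu(n)}\circ\cdots\circ\mathrm{WZ}_{\nu(1)}$. A function on a finite set with a permutation $\tau$ is homomesic if its average over every $\tau$-orbit is the same constant. *)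

theory Defs
  imports Complex_Main "HOL-Combinatorics.Permutations"
begin

text \<open>Tuples x = (x_1,...,x_n) are represented as functions nat => nat with
  coordinates at indices 1..n and value 0 at all other indices.\<close>

definition S :: "nat \<Rightarrow> (nat \<Rightarrow> nat) set" where
  "S n = {x. (\<forall>i. i \<notin> {1..n} \<longrightarrow> x i = 0) \<and>
             (\<exists>k\<le>n. (\<forall>i\<in>{1..k}. x i = 0) \<and>
                    (\<forall>i\<in>{k+1..n}. 1 \<le> x i \<and> x i \<le> n) \<and>
                    (\<forall>i j. k + 1 \<le> i \<longrightarrow> i < j \<longrightarrow> j \<le> n \<longrightarrow> x i < x j))}"

text \<open>Winching with zeros on index i (with the convention x_{n+1} = n+1).\<close>
definition WZ :: "nat \<Rightarrow> nat \<Rightarrow> (nat \<Rightarrow> nat) \<Rightarrow> (nat \<Rightarrow> nat)" where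
  "WZ n i x = x(i :=
     (let nxt = (if i = n then n + 1 else x (i + 1)) in
      if x i + 1 < nxt then x i + 1
      else if i > 1 \<and> x (i - 1) > 0 then x (i - 1) + 1
      else 0))"

text \<open>WZ_nu = WZ_{nu(n)} o ... o WZ_{nu(1)}: first apply WZ_{nu(1)}, last WZ_{nu(n)}.\<close>
definition WZperm :: "nat \<Rightarrow> (nat \<Rightarrow> nat) \<Rightarrow> (nat \<Rightarrow> nat) \<Rightarrow> (nat \<Rightarrow> nat)" where
  "WZperm n \<nu> x = foldl (\<lambda>y k. WZ n (\<nu> k) y) x [1..<n+1]"

definition orbit_of :: "('a \<Rightarrow> 'a) \<Rightarrow> 'a \<Rightarrow> 'a set" where
  "orbit_of \<tau> x = {(\<tau> ^^ k) x | k. True}"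

definition orbit_avg :: "('a \<Rightarrow> 'a) \<Rightarrow> ('a \<Rightarrow> real) \<Rightarrow> 'a \<Rightarrow> real" where
  "orbit_avg \<tau> f x = (\<Sum>y\<in>orbit_of \<tau> x. f y) / real (card (orbit_of \<tau> x))"

definition homomesic_with :: "'a set \<Rightarrow> ('a \<Rightarrow> 'a) \<Rightarrow> ('a \<Rightarrow> real) \<Rightarrow> real \<Rightarrow> bool" where
  "homomesic_with A \<tau> f c \<longleftrightarrow> (\<forall>x\<in>A. orbit_avg \<tau> f x = c)"

definition homomesic :: "'a set \<Rightarrow> ('a \<Rightarrow> 'a) \<Rightarrow> ('a \<Rightarrow> real) \<Rightarrow> bool" where
  "homomesic A \<tau> f \<longleftrightarrow> (\<exists>c. homomesic_with A \<tau> f c)"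

definition fj :: "nat \<Rightarrow> nat \<Rightarrow> (nat \<Rightarrow> nat) \<Rightarrow> real" where
  "fj n j x = (if j \<in> x ` {1..n} then 1 else 0)"

end

theory Submission
  imports Defs
begin


lemma S_zero: "x \<in> S n \<Longrightarrow> i \<notin> {1..n} \<Longrightarrow> x i = 0"
  by (auto simp: S_def)

lemma S_le: "x \<in> S n \<Longrightarrow> x i \<le> n"
proof -
  assume "x \<in> S n"
  then obtain k where k: "k \<le> n" "\<forall>i\<in>{1..k}. x i = 0" "\<forall>i\<in>{k+1..n}. 1 \<le> x i \<and> x i \<le> n"
    and z: "\<forall>i. i \<notin> {1..n} \<longrightarrow> x i = 0" by (auto simp: S_def)
  show ?thesis
  proof (cases "i \<in> {1..n}")
    case True
    then show ?thesis using k by (cases "i \<le> k") auto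
  qed (use z in auto)
qed

lemma S_mono: "x \<in> S n \<Longrightarrow> 0 < x a \<Longrightarrow> a < b \<Longrightarrow> b \<le> n \<Longrightarrow> x a < x b"
proof -
  assume x: "x \<in> S n" and a: "0 < x a" "a < b" "b \<le> n"
  then obtain k where k: "k \<le> n" "\<forall>i\<in>{1..k}. x i = 0"
    "\<forall>i j. k + 1 \<le> i \<longrightarrow> i < j \<longrightarrow> j \<le> n \<longrightarrow> x i < x j"
    and z: "\<forall>i. i \<notin> {1..n} \<longrightarrow> x i = 0" by (auto simp: S_def)
  have "a \<ge> 1" using z a by (metis atLeastAtMost_iff less_numeral_extra(3) linorder_not_less less_one order.strict_trans2 le_less)
  have "\<not> a \<le> k" using k(2) a \<open>a \<ge> 1\<close> by auto
  then show ?thesis using k(3) a by auto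
qed

definition LS :: "nat \<Rightarrow> (nat \<Rightarrow> nat) \<Rightarrow> bool" where
  "LS n x \<longleftrightarrow> (\<forall>i. i \<notin> {1..n} \<longrightarrow> x i = 0) \<and>
     (\<forall>i\<in>{1..n}. x i = 0 \<or> x i < (if i = n then n + 1 else x (Suc i)))"

lemma S_LS: "x \<in> S n \<Longrightarrow> LS n x"
  unfolding LS_def
proof (intro conjI ballI allI impI)
  fix i assume "x \<in> S n" "i \<notin> {1..n}" then show "x i = 0" by (rule S_zero)
next
  fix i assume x: "x \<in> S n" and i: "i \<in> {1..n}"
  show "x i = 0 \<or> x i < (if i = n then n + 1 else x (Suc i))"
  proof (cases "i = n")
    case True then show ?thesis using S_le[OF x, of i] by auto
  next
    case False then show ?thesis using S_mono[OF x, of i "Suc i"] i by auto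
  qed
qed

lemma LS_up: "LS n x \<Longrightarrow> 0 < x i \<Longrightarrow> 1 \<le> i \<Longrightarrow> i + d \<le> n \<Longrightarrow> x i + d \<le> x (i + d)"
proof (induction d)
  case 0 then show ?case by simp
next
  case (Suc d)
  then have h: "x i + d \<le> x (i + d)" by simp
  have "i + d \<in> {1..n}" "i + d \<noteq> n" using Suc.prems by auto
  then have "x (i+d) = 0 \<or> x (i+d) < x (Suc (i + d))" using Suc.prems(1) unfolding LS_def by auto
  then show ?case using h Suc.prems by auto
qed

lemma LS_S: "LS n x \<Longrightarrow> x \<in> S n"
proof -
  assume L: "LS n x"
  have z: "\<forall>i. i \<notin> {1..n} \<longrightarrow> x i = 0" using L by (simp add: LS_def)
  have up: "x i < x j" if "0 < x i" "i < j" "j \<le> n" for i j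
  proof -
    have "1 \<le> i" using z that by (metis atLeastAtMost_iff less_one not_le order.strict_trans2 less_imp_le_nat neq0_conv)
    then show ?thesis using LS_up[OF L that(1) \<open>1 \<le> i\<close>, of "j - i"] that by auto
  qed
  have top: "x n < n + 1" if "0 < x n"
  proof -
    have "n \<in> {1..n}" using that z by (cases n) auto
    then show ?thesis using L that unfolding LS_def by fastforce
  qed
  show ?thesis
  proof (cases "\<exists>i. 1 \<le> i \<and> i \<le> n \<and> 0 < x i")
    case False
    then show ?thesis unfolding S_def using z
      by (auto intro!: exI[of _ n])
  next
    case True
    define m where "m = (LEAST i. 1 \<le> i \<and> i \<le> n \<and> 0 < x i)"
    have m: "1 \<le> m \<and> m \<le> n \<and> 0 < x m" using LeastI_ex[OF True] m_def by simp
    have lt: "x i = 0" if "1 \<le> i" "i < m" for i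
      using not_less_Least[of i "\<lambda>i. 1 \<le> i \<and> i \<le> n \<and> 0 < x i"] that m unfolding m_def[symmetric] by auto
    have pos: "0 < x i \<and> x i \<le> n" if "m \<le> i" "i \<le> n" for i
    proof -
      have a: "0 < x i" using up[of m i] m that by (cases "m = i") auto
      have "x i \<le> x n" using up[of i n] a that by (cases "i = n") auto
      then show ?thesis using top a \<open>i \<le> n\<close> by (cases "i = n") auto
    qed
    show ?thesis unfolding S_def
      apply (simp add: z)
      apply (rule exI[of _ "m - 1"])
      using m lt pos up by (auto simp: Suc_le_eq)
  qed
qed

lemma S_iff: "x \<in> S n \<longleftrightarrow> LS n x"
  using S_LS LS_S by blast



lemma WZ_other: "j \<noteq> i \<Longrightarrow> WZ n i x j = x j"
  by (simp add: WZ_def)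

lemma WZ_same: "WZ n i x i = (let nxt = (if i = n then n + 1 else x (i + 1)) in
      if x i + 1 < nxt then x i + 1
      else if i > 1 \<and> x (i - 1) > 0 then x (i - 1) + 1
      else 0)"
  by (simp add: WZ_def)

lemma LS_left: "LS n x \<Longrightarrow> 1 < i \<Longrightarrow> i \<le> n \<Longrightarrow> x (i - 1) = 0 \<or> x (i - 1) < x i"
proof -
  assume L: "LS n x" and i: "1 < i" "i \<le> n"
  have "i - 1 \<in> {1..n}" "i - 1 \<noteq> n" "Suc (i - 1) = i" using i by auto
  then show ?thesis using L unfolding LS_def by metis
qed

lemma WZ_in_S: assumes x: "x \<in> S n" and i: "i \<in> {1..n}" shows "WZ n i x \<in> S n"
proof -
  have L: "LS n x" using x S_iff by blast
  define y where "y = WZ n i x"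
  have yo: "y j = x j" if "j \<noteq> i" for j using that WZ_other y_def by simp
  have yi: "y i = (let nxt = (if i = n then n + 1 else x (i + 1)) in
      if x i + 1 < nxt then x i + 1
      else if i > 1 \<and> x (i - 1) > 0 then x (i - 1) + 1
      else 0)" using WZ_same y_def by simp
  have ci: "x i = 0 \<or> x i < (if i = n then n + 1 else x (Suc i))" using L i unfolding LS_def by auto
  have cl: "x (i - 1) = 0 \<or> x (i - 1) < x i" if "1 < i" using LS_left[OF L that] i by auto
  have "LS n y"
    unfolding LS_def
  proof (intro conjI allI impI ballI)
    fix j assume "j \<notin> {1..n}" then show "y j = 0" using i yo L unfolding LS_def by (metis)
  next
    fix j assume j: "j \<in> {1..n}"
    show "y j = 0 \<or> y j < (if j = n then n + 1 else y (Suc j))"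
    proof (cases "j = i")
      case True
      then show ?thesis using yi ci cl yo[of "Suc i"] i by (auto simp: Let_def split: if_splits)
    next
      case False
      note F = False
      show ?thesis
      proof (cases "Suc j = i")
        case True
        have "j \<noteq> n" using True i by auto
        then have cj: "x j = 0 \<or> x j < x i" using L j True unfolding LS_def by auto
        then show ?thesis using yi ci cl yo[of j] F True i j by (auto simp: Let_def split: if_splits)
      next
        case False
        then show ?thesis using yo[of j] yo[of "Suc j"] F L j unfolding LS_def by auto
      qed
    qed
  qed
  then show ?thesis using S_iff y_def by blast
qed

lemma winch_arith:
  fixes v v' r l :: nat
  assumes "v = 0 \<or> v < r" "v' = 0 \<or> v' < r" "l = 0 \<or> l < v" "l = 0 \<or> l < v'"
    "(if v + 1 < r then v + 1 else if P \<and> 0 < l then l + 1 else 0)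
   = (if v' + 1 < r then v' + 1 else if P \<and> 0 < l then l + 1 else 0)"
  shows "v = v'"
  using assms by (auto split: if_splits)

lemma WZ_inj: assumes x: "x \<in> S n" and x': "x' \<in> S n" and i: "i \<in> {1..n}"
  and e: "WZ n i x = WZ n i x'" shows "x = x'"
proof -
  have L: "LS n x" "LS n x'" using x x' S_iff by blast+
  have o: "x j = x' j" if "j \<noteq> i" for j using WZ_other[OF that, of n x] WZ_other[OF that, of n x'] e by simp
  have ci: "x i = 0 \<or> x i < (if i = n then n + 1 else x (Suc i))" "x' i = 0 \<or> x' i < (if i = n then n + 1 else x' (Suc i))"
    using L i unfolding LS_def by auto
  have cl: "x (i - 1) = 0 \<or> x (i - 1) < x i" "x' (i - 1) = 0 \<or> x' (i - 1) < x' i"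
  proof -
    show "x (i - 1) = 0 \<or> x (i - 1) < x i"
    proof (cases "1 < i")
      case True then show ?thesis using LS_left[OF L(1) True] i by auto
    next
      case False then have "i - 1 \<notin> {1..n}" by auto
      then show ?thesis using L(1) unfolding LS_def by auto
    qed
    show "x' (i - 1) = 0 \<or> x' (i - 1) < x' i"
    proof (cases "1 < i")
      case True then show ?thesis using LS_left[OF L(2) True] i by auto
    next
      case False then have "i - 1 \<notin> {1..n}" by auto
      then show ?thesis using L(2) unfolding LS_def by auto
    qed
  qed
  have ei: "WZ n i x i = WZ n i x' i" using e by simp
  have n1: "x (i + 1) = x' (i + 1)" "x (i - 1) = x' (i - 1)" using o i by auto
  have "x i = x' i"
    apply (rule winch_arith[where r = "if i = n then n + 1 else x (i + 1)" and l = "x (i - 1)" and P = "i > 1"])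
    using ci cl ei n1 unfolding WZ_same Let_def by auto
  then show ?thesis using o by (metis ext)
qed

lemma finite_S: "finite (S n)"
proof -
  have "S n \<subseteq> {f. \<forall>x. (x \<in> {1..n} \<longrightarrow> f x \<in> {0..n}) \<and> (x \<notin> {1..n} \<longrightarrow> f x = 0)}"
    using S_le S_zero by auto
  moreover have "finite {f. \<forall>x. (x \<in> {1..n} \<longrightarrow> f x \<in> {0..n}) \<and> (x \<notin> {1..n} \<longrightarrow> f x = (0::nat))}"
    by (rule finite_set_of_finite_funs) auto
  ultimately show ?thesis by (rule finite_subset)
qed

lemma WZ_surj: assumes "x \<in> S n" "i \<in> {1..n}" shows "\<exists>z\<in>S n. WZ n i z = x"
proof -
  have "WZ n i ` S n = S n"
    by (rule endo_inj_surj[OF finite_S]) (use WZ_in_S WZ_inj assms(2) in \<open>auto simp: inj_on_def\<close>)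
  then show ?thesis using assms(1) by (metis imageE)
qed

lemma WZ_comm: "a + 2 \<le> b \<or> b + 2 \<le> a \<Longrightarrow> WZ n a (WZ n b x) = WZ n b (WZ n a x)"
proof (rule ext)
  fix j assume h: "a + 2 \<le> b \<or> b + 2 \<le> a"
  have d: "a \<noteq> b" "a \<noteq> b + 1" "b \<noteq> a + 1" "a \<noteq> b - 1" "b \<noteq> a - 1" using h by auto
  have e1: "WZ n b x (a - 1) = x (a - 1)" "WZ n b x a = x a" "WZ n b x (a + 1) = x (a + 1)"
    using d by (auto simp: WZ_def)
  have e2: "WZ n a x (b - 1) = x (b - 1)" "WZ n a x b = x b" "WZ n a x (b + 1) = x (b + 1)"
    using d by (auto simp: WZ_def)
  show "WZ n a (WZ n b x) j = WZ n b (WZ n a x) j"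
    unfolding WZ_def[of n a "WZ n b x"] WZ_def[of n b "WZ n a x"] e1 e2
    using d by (simp add: WZ_def)
qed



definition Cl :: "nat \<Rightarrow> nat list \<Rightarrow> (nat \<Rightarrow> nat) \<Rightarrow> (nat \<Rightarrow> nat)" where
  "Cl n L x = foldl (\<lambda>y k. WZ n k y) x L"

lemma Cl_Nil[simp]: "Cl n [] x = x" by (simp add: Cl_def)
lemma Cl_Cons[simp]: "Cl n (b # M) x = Cl n M (WZ n b x)" by (simp add: Cl_def)
lemma Cl_snoc[simp]: "Cl n (M @ [b]) x = WZ n b (Cl n M x)" by (simp add: Cl_def)

lemma Cl_in_S: "set L \<subseteq> {1..n} \<Longrightarrow> x \<in> S n \<Longrightarrow> Cl n L x \<in> S n"
  by (induction L arbitrary: x) (simp_all add: WZ_in_S)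

lemma Cl_other: "b \<notin> set M \<Longrightarrow> Cl n M x b = x b"
  by (induction M arbitrary: x) (auto simp: WZ_other)

lemma Cl_comm: "(\<forall>c\<in>set q. c + 2 \<le> b \<or> b + 2 \<le> c) \<Longrightarrow> Cl n (b # q) x = Cl n (q @ [b]) x"
proof (induction q arbitrary: x)
  case Nil then show ?case by simp
next
  case (Cons c q)
  have "Cl n (b # c # q) x = Cl n q (WZ n c (WZ n b x))" by (simp add: WZ_comm Cons.prems)
  also have "\<dots> = Cl n (b # q) (WZ n c x)" using Cons.prems by (simp add: WZ_comm)
  also have "\<dots> = Cl n (q @ [b]) (WZ n c x)" using Cons by simp
  finally show ?case by (simp add: Cl_def)
qed

definition Pc :: "nat \<Rightarrow> ((nat \<Rightarrow> nat) \<Rightarrow> (nat \<Rightarrow> nat)) \<Rightarrow> bool" where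
  "Pc n c \<longleftrightarrow> (\<forall>x\<in>S n. c x \<in> S n) \<and> (\<forall>x\<in>S n. (c ^^ (2 * n)) x = x) \<and>
     (\<forall>x\<in>S n. \<forall>j\<in>{1..n}. (\<Sum>t<2 * n. fj n j ((c ^^ t) x)) = real n)"

lemma S_distinct: "y \<in> S n \<Longrightarrow> i \<noteq> b \<Longrightarrow> i \<le> n \<Longrightarrow> b \<le> n \<Longrightarrow> 0 < y b \<Longrightarrow> y i \<noteq> y b"
  by (metis S_mono linorder_neqE_nat not_less_iff_gr_or_eq)

lemma fj_split: assumes y: "y \<in> S n" and b: "b \<in> {1..n}" and j: "1 \<le> j"
  shows "fj n j y = of_bool (y b = j) + of_bool (\<exists>i\<in>{1..n} - {b}. y i = j)"
proof (cases "y b = j")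
  case True
  then have "\<not> (\<exists>i\<in>{1..n} - {b}. y i = j)" using S_distinct[OF y, of _ b] b j by fastforce
  then show ?thesis using True b by (auto simp: fj_def)
next
  case False
  then show ?thesis using b by (auto simp: fj_def)
qed

lemma sum_shift_period: "h N = h 0 \<Longrightarrow> (\<Sum>t<N. h (Suc t)) = (\<Sum>t<N. (h t :: real))"
proof -
  assume "h N = h 0"
  have "(\<Sum>t<Suc N. h t) = h 0 + (\<Sum>t<N. h (Suc t))" by (rule sum.lessThan_Suc_shift)
  moreover have "(\<Sum>t<Suc N. h t) = (\<Sum>t<N. h t) + h N" by simp
  ultimately show ?thesis using \<open>h N = h 0\<close> by simp
qed

lemma transfer:
  assumes b: "b \<in> {1..n}" and bM: "b \<notin> set M" and M: "set M \<subseteq> {1..n}"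
    and P: "Pc n (Cl n (b # M))"
  shows "Pc n (Cl n (M @ [b]))"
proof -
  define c1 where "c1 = Cl n (b # M)"
  define c2 where "c2 = Cl n (M @ [b])"
  have c1: "c1 x = Cl n M (WZ n b x)" for x by (simp add: c1_def)
  have c2: "c2 x = WZ n b (Cl n M x)" for x by (simp add: c2_def)
  have key: "(c2 ^^ t) (WZ n b z) = WZ n b ((c1 ^^ t) z)" for t z
    by (induction t) (auto simp: c1 c2)
  have c1S: "\<forall>x\<in>S n. c1 x \<in> S n" and per: "\<forall>x\<in>S n. (c1 ^^ (2 * n)) x = x"
    and sm: "\<forall>x\<in>S n. \<forall>j\<in>{1..n}. (\<Sum>t<2 * n. fj n j ((c1 ^^ t) x)) = real n"
    using P unfolding Pc_def c1_def by auto
  have c1tS: "(c1 ^^ t) x \<in> S n" if "x \<in> S n" for t x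
    using that c1S by (induction t) auto
  have c2S: "\<forall>x\<in>S n. c2 x \<in> S n" using c2 Cl_in_S[OF M] WZ_in_S b by auto
  have per2: "\<forall>x\<in>S n. (c2 ^^ (2 * n)) x = x"
  proof
    fix x assume x: "x \<in> S n"
    obtain z where z: "z \<in> S n" "WZ n b z = x" using WZ_surj[OF x b] by blast
    show "(c2 ^^ (2 * n)) x = x" using key[of "2*n" z] per z by simp
  qed
  have sm2: "\<forall>x\<in>S n. \<forall>j\<in>{1..n}. (\<Sum>t<2 * n. fj n j ((c2 ^^ t) x)) = real n"
  proof (intro ballI)
    fix x j assume x: "x \<in> S n" and j: "j \<in> {1..n}"
    obtain z where z: "z \<in> S n" "WZ n b z = x" using WZ_surj[OF x b] by blast
    define g where "g w = (of_bool (\<exists>i\<in>{1..n} - {b}. w i = j) :: real)" for w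
    have gW: "g (WZ n b w) = g w" for w
    proof -
      have "\<forall>i\<in>{1..n} - {b}. WZ n b w i = w i" by (simp add: WZ_other)
      then have "(\<exists>i\<in>{1..n} - {b}. WZ n b w i = j) \<longleftrightarrow> (\<exists>i\<in>{1..n} - {b}. w i = j)" by auto
      then show ?thesis unfolding g_def by simp
    qed
    have bcoord: "WZ n b ((c1 ^^ t) z) b = (c1 ^^ Suc t) z b" for t
      by (simp add: c1 Cl_other[OF bM])
    have "(\<Sum>t<2 * n. fj n j ((c2 ^^ t) x)) = (\<Sum>t<2 * n. fj n j (WZ n b ((c1 ^^ t) z)))"
      by (simp add: z(2)[symmetric] key)
    also have "\<dots> = (\<Sum>t<2 * n. of_bool ((c1 ^^ Suc t) z b = j) + g ((c1 ^^ t) z))"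
    proof (rule sum.cong[OF refl])
      fix t
      have "WZ n b ((c1 ^^ t) z) \<in> S n" using WZ_in_S[OF c1tS[OF z(1)] b] .
      then have "fj n j (WZ n b ((c1 ^^ t) z)) = of_bool (WZ n b ((c1 ^^ t) z) b = j) + g (WZ n b ((c1 ^^ t) z))"
        using fj_split[OF _ b] j unfolding g_def by auto
      then show "fj n j (WZ n b ((c1 ^^ t) z)) = of_bool ((c1 ^^ Suc t) z b = j) + g ((c1 ^^ t) z)"
        using bcoord gW by simp
    qed
    also have "\<dots> = (\<Sum>t<2 * n. of_bool ((c1 ^^ Suc t) z b = j)) + (\<Sum>t<2 * n. g ((c1 ^^ t) z))"
      by (rule sum.distrib)
    also have "(\<Sum>t<2 * n. of_bool ((c1 ^^ Suc t) z b = j)) = (\<Sum>t<2 * n. (of_bool ((c1 ^^ t) z b = j) :: real))"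
      by (rule sum_shift_period[where h = "\<lambda>t. of_bool ((c1 ^^ t) z b = j)"]) (use per z in simp)
    also have "\<dots> + (\<Sum>t<2 * n. g ((c1 ^^ t) z)) = (\<Sum>t<2 * n. of_bool ((c1 ^^ t) z b = j) + g ((c1 ^^ t) z))"
      by (rule sum.distrib[symmetric])
    also have "\<dots> = (\<Sum>t<2 * n. fj n j ((c1 ^^ t) z))"
      using fj_split[OF c1tS[OF z(1)] b] j unfolding g_def by simp
    also have "\<dots> = real n" using sm z j by auto
    finally show "(\<Sum>t<2 * n. fj n j ((c2 ^^ t) x)) = real n" .
  qed
  show ?thesis unfolding Pc_def c2_def[symmetric] using c2S per2 sm2 by blast
qed



definition ystep :: "nat \<Rightarrow> (nat \<Rightarrow> nat) \<Rightarrow> nat \<Rightarrow> nat" where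
  "ystep n x i = (if i \<in> {1..n} then
     (if x n = n then (if 1 < i \<and> 0 < x (i - 1) then x (i - 1) + 1 else 0)
      else (if 0 < x i then x i + 1 else if i = n \<or> 0 < x (Suc i) then 1 else 0)) else 0)"

lemma ystep_local:
  assumes x: "x \<in> S n" and m: "m \<in> {1..n}" and H: "H m = x m" "H (m - 1) = x (m - 1)"
    "m < n \<Longrightarrow> H (m + 1) = ystep n x (m + 1)"
  shows "WZ n m H m = ystep n x m"
proof -
  have W: "WZ n m H m = (if H m + 1 < (if m = n then n + 1 else H (m + 1)) then H m + 1
      else if m > 1 \<and> H (m - 1) > 0 then H (m - 1) + 1 else 0)"
    by (simp add: WZ_same Let_def)
  show ?thesis
  proof (cases "x n = n")
    case True
    show ?thesis
    proof (cases "m = n")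
      case True
      then show ?thesis using W H \<open>x n = n\<close> m by (simp add: ystep_def)
    next
      case False
      then have "m < n" using m by auto
      then have "H (m + 1) = (if 0 < x m then x m + 1 else 0)" using H(3) \<open>x n = n\<close> m
        by (simp add: ystep_def)
      then show ?thesis using W H \<open>x n = n\<close> m by (simp add: ystep_def)
    qed
  next
    case False
    then have xn: "x n < n" using S_le[OF x, of n] by simp
    show ?thesis
    proof (cases "m = n")
      case True
      then show ?thesis using W H xn m by (auto simp: ystep_def)
    next
      case False
      then have mn: "m < n" using m by auto
      have H1: "H (m + 1) = (if 0 < x (m + 1) then x (m + 1) + 1 else if m + 1 = n \<or> 0 < x (Suc (m + 1)) then 1 else 0)"
        using H(3)[OF mn] \<open>x n \<noteq> n\<close> mn by (simp add: ystep_def)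
      have mono1: "0 < x m \<Longrightarrow> x m < x (m + 1)" using S_mono[OF x, of m "m+1"] mn by simp
      have mono2: "1 < m \<Longrightarrow> 0 < x (m - 1) \<Longrightarrow> x (m - 1) < x m" using S_mono[OF x, of "m - 1" m] mn by simp
      have ym: "ystep n x m = (if 0 < x m then x m + 1 else if 0 < x (Suc m) then 1 else 0)"
        using mn m \<open>x n \<noteq> n\<close> by (simp add: ystep_def)
      show ?thesis
      proof (cases "0 < x m")
        case True
        then show ?thesis using W H H1 mono1 ym mn by simp
      next
        case False
        then have x0: "x m = 0" by simp
        have xl: "1 < m \<Longrightarrow> x (m - 1) = 0" using mono2 x0 by (cases "x (m - 1) = 0") auto
        show ?thesis
        proof (cases "0 < x (m + 1)")
          case True
          then show ?thesis using W H H1 x0 ym mn by simp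
        next
          case False
          then have "H (m + 1) \<le> 1" using H1 by simp
          then show ?thesis using W H x0 ym xl False mn by auto
        qed
      qed
    qed
  qed
qed

lemma Cl_rev_Cons: "Cl n (rev (a # xs)) x = WZ n a (Cl n (rev xs) x)"
  by simp

lemma fold_inv:
  assumes x: "x \<in> S n"
  shows "d \<le> n \<Longrightarrow> Cl n (rev [n + 1 - d..<n + 1]) x = (\<lambda>j. if n + 1 - d \<le> j \<and> j \<le> n then ystep n x j else x j)"
proof (induction d)
  case 0 then show ?case by (auto simp: fun_eq_iff)
next
  case (Suc d)
  define m where "m = n - d"
  have m: "1 \<le> m" "m \<le> n" "n + 1 - Suc d = m" "n + 1 - d = m + 1" using Suc.prems m_def by auto
  have ls: "[m..<n + 1] = m # [m + 1..<n + 1]" using m by (simp add: upt_conv_Cons)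
  define H where "H = (\<lambda>j. if m + 1 \<le> j \<and> j \<le> n then ystep n x j else x j)"
  have IH: "Cl n (rev [m + 1..<n + 1]) x = H"
    using Suc.IH[OF Suc_leD[OF Suc.prems]] unfolding m(4) H_def .
  have "Cl n (rev [n + 1 - Suc d..<n + 1]) x = Cl n (rev (m # [m + 1..<n + 1])) x"
    unfolding m(3) ls ..
  also have "\<dots> = WZ n m (Cl n (rev [m + 1..<n + 1]) x)" by (rule Cl_rev_Cons)
  also have "\<dots> = WZ n m H" unfolding IH ..
  also have "\<dots> = (\<lambda>j. if m \<le> j \<and> j \<le> n then ystep n x j else x j)"
  proof (rule ext)
    fix j
    show "WZ n m H j = (if m \<le> j \<and> j \<le> n then ystep n x j else x j)"
    proof (cases "j = m")
      case True
      have "WZ n m H m = ystep n x m"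
        by (rule ystep_local[OF x]) (use m in \<open>auto simp: H_def\<close>)
      then show ?thesis using True m by simp
    next
      case False
      then show ?thesis using WZ_other[OF False] by (auto simp: H_def)
    qed
  qed
  finally show ?case unfolding m(3) .
qed

lemma Cl_rev_ystep:
  assumes x: "x \<in> S n" shows "Cl n (rev [1..<n + 1]) x = ystep n x"
proof -
  have "Cl n (rev [n + 1 - n..<n + 1]) x = (\<lambda>j. if n + 1 - n \<le> j \<and> j \<le> n then ystep n x j else x j)"
    by (rule fold_inv[OF x]) simp
  then show ?thesis using S_zero[OF x] by (auto simp: fun_eq_iff ystep_def)
qed



definition Aset :: "nat \<Rightarrow> (nat \<Rightarrow> nat) \<Rightarrow> nat set" where
  "Aset n x = {v. 0 < v \<and> (\<exists>i\<in>{1..n}. x i = v)}"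

definition sig :: "nat \<Rightarrow> nat set \<Rightarrow> nat set" where
  "sig n B = {j. (2 \<le> j \<and> j \<le> n \<and> j - 1 \<in> B) \<or> (j = 1 \<and> n \<notin> B)}"

lemma Aset_inj_aux:
  assumes x: "x \<in> S n" and x': "x' \<in> S n" and A: "Aset n x = Aset n x'"
    and i: "i \<in> {1..n}" and above: "\<forall>j. i < j \<and> j \<le> n \<longrightarrow> x j = x' j" and lt: "x i < x' i"
  shows False
proof -
  have "x' i \<in> Aset n x" unfolding A using lt i by (auto simp: Aset_def)
  then obtain l where l: "l \<in> {1..n}" "x l = x' i" by (auto simp: Aset_def)
  have "\<not> l \<le> i"
  proof
    assume "l \<le> i"
    moreover have "l \<noteq> i" using l lt by auto
    ultimately show False using S_mono[OF x, of l i] l lt i by auto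
  qed
  then have "x' l = x' i" "l \<noteq> i" using above l by auto
  then show False using S_distinct[OF x', of l i] l i lt by auto
qed

lemma Aset_inj:
  assumes x: "x \<in> S n" and x': "x' \<in> S n" and A: "Aset n x = Aset n x'"
  shows "x = x'"
proof (rule ccontr)
  assume ne: "x \<noteq> x'"
  define D where "D = {i\<in>{1..n}. x i \<noteq> x' i}"
  have "D \<noteq> {}"
  proof
    assume "D = {}"
    then have "x i = x' i" for i using S_zero[OF x, of i] S_zero[OF x', of i] by (cases "i \<in> {1..n}") (auto simp: D_def)
    then show False using ne by auto
  qed
  moreover have "finite D" by (simp add: D_def)
  ultimately have iD: "Max D \<in> D" and mx: "\<And>j. j \<in> D \<Longrightarrow> j \<le> Max D" by auto
  define i where "i = Max D"
  have i: "i \<in> {1..n}" "x i \<noteq> x' i" using iD by (auto simp: D_def i_def)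
  have above: "\<forall>j. i < j \<and> j \<le> n \<longrightarrow> x j = x' j"
  proof (intro allI impI)
    fix j assume j: "i < j \<and> j \<le> n"
    show "x j = x' j"
    proof (rule ccontr)
      assume "x j \<noteq> x' j"
      then have "j \<in> D" using j i(1) by (auto simp: D_def)
      then have "j \<le> i" using mx i_def by auto
      then show False using j by auto
    qed
  qed
  show False
  proof (cases "x i < x' i")
    case True then show ?thesis using Aset_inj_aux[OF x x' A i(1) above] by blast
  next
    case False
    then have "x' i < x i" using i by auto
    then show ?thesis using Aset_inj_aux[OF x' x A[symmetric] i(1)] above by auto
  qed
qed

lemma Aset_sub: "x \<in> S n \<Longrightarrow> Aset n x \<subseteq> {1..n}"
  using S_le by (fastforce simp: Aset_def)

lemma fj_Aset: "1 \<le> j \<Longrightarrow> fj n j y = of_bool (j \<in> Aset n y)"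
  by (auto simp: fj_def Aset_def)

lemma A_ystep:
  assumes x: "x \<in> S n" and n: "1 \<le> n"
  shows "Aset n (ystep n x) = sig n (Aset n x)"
proof (cases "x n = n")
  case True
  have y: "ystep n x i = (if i \<in> {1..n} then (if 1 < i \<and> 0 < x (i - 1) then x (i - 1) + 1 else 0) else 0)" for i
    using True by (simp add: ystep_def)
  have nA: "n \<in> Aset n x" using True n by (auto simp: Aset_def)
  show ?thesis
  proof (rule set_eqI)
    fix v
    show "v \<in> Aset n (ystep n x) \<longleftrightarrow> v \<in> sig n (Aset n x)"
    proof
      assume "v \<in> Aset n (ystep n x)"
      then obtain i where i: "i \<in> {1..n}" "1 < i" "0 < x (i - 1)" "v = x (i - 1) + 1"
        unfolding Aset_def y by (auto split: if_splits)
      have "x (i - 1) < x n" using S_mono[OF x, of "i - 1" n] i by auto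
      then have "v \<le> n" using True i by simp
      moreover have "v - 1 \<in> Aset n x" using i by (auto simp: Aset_def intro!: bexI[of _ "i - 1"])
      ultimately show "v \<in> sig n (Aset n x)" using i by (auto simp: sig_def)
    next
      assume "v \<in> sig n (Aset n x)"
      then have v: "2 \<le> v" "v \<le> n" "v - 1 \<in> Aset n x" using nA by (auto simp: sig_def)
      then obtain l where l: "l \<in> {1..n}" "x l = v - 1" "0 < x l" by (auto simp: Aset_def)
      have "l \<noteq> n" using l v True by auto
      then have "Suc l \<in> {1..n}" "ystep n x (Suc l) = v" using l v y[of "Suc l"] by auto
      then show "v \<in> Aset n (ystep n x)" using v by (force simp: Aset_def)
    qed
  qed
next
  case False
  then have xn: "x n < n" using S_le[OF x, of n] by simp
  have y: "ystep n x i = (if i \<in> {1..n} then (if 0 < x i then x i + 1 else if i = n \<or> 0 < x (Suc i) then 1 else 0) else 0)" for i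
    using False by (simp add: ystep_def)
  have xlt: "x i < n" if "i \<in> {1..n}" for i
  proof (cases "i = n")
    case True then show ?thesis using xn by simp
  next
    case False
    then show ?thesis using S_mono[OF x, of i n] that xn by (cases "x i = 0") auto
  qed
  have "\<forall>i\<in>{1..n}. x i \<noteq> n" using xlt by (metis less_irrefl)
  then have nA: "n \<notin> Aset n x" unfolding Aset_def by blast
  show ?thesis
  proof (rule set_eqI)
    fix v
    show "v \<in> Aset n (ystep n x) \<longleftrightarrow> v \<in> sig n (Aset n x)"
    proof
      assume "v \<in> Aset n (ystep n x)"
      then obtain i where i: "i \<in> {1..n}" "ystep n x i = v" "0 < v" by (auto simp: Aset_def)
      show "v \<in> sig n (Aset n x)"
      proof (cases "0 < x i")
        case True
        then have "v = x i + 1" using i y by simp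
        moreover have "x i \<in> Aset n x" using True i by (auto simp: Aset_def)
        ultimately show ?thesis using xlt[OF i(1)] True by (auto simp: sig_def)
      next
        case False
        then have "v = 1" using i y by (auto split: if_splits)
        then show ?thesis using nA by (simp add: sig_def)
      qed
    next
      assume v: "v \<in> sig n (Aset n x)"
      show "v \<in> Aset n (ystep n x)"
      proof (cases "v = 1")
        case True
        have "\<exists>i\<in>{1..n}. x i = 0 \<and> (i = n \<or> 0 < x (Suc i))"
        proof (cases "x n = 0")
          case True then show ?thesis using n by auto
        next
          case False
          have L: "LS n x" using x S_iff by blast
          have x1: "x 1 = 0"
          proof (rule ccontr)
            assume "x 1 \<noteq> 0"
            then have "x 1 + (n - 1) \<le> x (1 + (n - 1))" using LS_up[OF L, of 1 "n - 1"] n by simp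
            then show False using xn n \<open>x 1 \<noteq> 0\<close> by simp
          qed
          define Z where "Z = {i\<in>{1..n}. x i = 0}"
          have "1 \<in> Z" using x1 n by (simp add: Z_def)
          moreover have "finite Z" by (simp add: Z_def)
          ultimately have fZ: "finite Z" "Z \<noteq> {}" by auto
          then have mZ: "Max Z \<in> Z" "\<And>j. j \<in> Z \<Longrightarrow> j \<le> Max Z"
            using Max_in[OF fZ] Max_ge[OF fZ(1)] by auto
          have "Max Z \<noteq> n" using mZ(1) False by (auto simp: Z_def)
          then have "Max Z < n" using mZ(1) by (auto simp: Z_def)
          moreover have "x (Suc (Max Z)) \<noteq> 0"
          proof
            assume "x (Suc (Max Z)) = 0"
            then have "Suc (Max Z) \<in> Z" using \<open>Max Z < n\<close> by (simp add: Z_def)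
            then show False using mZ(2) by fastforce
          qed
          ultimately show ?thesis using mZ(1) by (auto simp: Z_def)
        qed
        then obtain i where "i \<in> {1..n}" "x i = 0" "i = n \<or> 0 < x (Suc i)" by blast
        then have "ystep n x i = 1" "i \<in> {1..n}" using y[of i] by auto
        then show ?thesis using True by (force simp: Aset_def)
      next
        case False
        then have v2: "2 \<le> v" "v - 1 \<in> Aset n x" using v by (auto simp: sig_def)
        then obtain l where l: "l \<in> {1..n}" "x l = v - 1" "0 < x l" by (auto simp: Aset_def)
        then have "ystep n x l = v" using y[of l] v2 by auto
        then show ?thesis using l v2 by (force simp: Aset_def)
      qed
    qed
  qed
qed



lemma sig_pow:
  assumes B: "B \<subseteq> {1..n}"
  shows "t \<le> n \<Longrightarrow> j \<in> (sig n ^^ t) B \<longleftrightarrow> (1 \<le> j \<and> j \<le> n \<and> (if t < j then j - t \<in> B else n - t + j \<notin> B))"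
proof (induction t arbitrary: j)
  case 0 then show ?case using B by auto
next
  case (Suc t)
  have tn: "t < n" using Suc.prems by simp
  let ?C = "(sig n ^^ t) B"
  have IH: "\<And>j. j \<in> ?C \<longleftrightarrow> (1 \<le> j \<and> j \<le> n \<and> (if t < j then j - t \<in> B else n - t + j \<notin> B))"
    using Suc.IH tn by simp
  have step: "j \<in> (sig n ^^ Suc t) B \<longleftrightarrow> (2 \<le> j \<and> j \<le> n \<and> j - 1 \<in> ?C) \<or> (j = 1 \<and> n \<notin> ?C)"
    by (simp add: sig_def)
  show ?case
  proof (cases "j \<ge> 2")
    case True
    have e1: "j - 1 - t = j - Suc t" by simp
    have e2: "n - t + (j - 1) = n - Suc t + j" using tn True by simp
    show ?thesis unfolding step IH using True e1 e2 by auto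
  next
    case False
    then have "j = 0 \<or> j = 1" by auto
    then show ?thesis
    proof
      assume "j = 0" then show ?thesis unfolding step by simp
    next
      assume j1: "j = 1"
      have e: "n - Suc t + 1 = n - t" using tn by simp
      show ?thesis unfolding step IH using j1 e tn by auto
    qed
  qed
qed

lemma sig_n: "B \<subseteq> {1..n} \<Longrightarrow> (sig n ^^ n) B = {1..n} - B"
  using sig_pow[of B n n] by auto

lemma sig_sub: "1 \<le> n \<Longrightarrow> sig n B \<subseteq> {1..n}"
  by (auto simp: sig_def)

lemma sig_pow_sub: "1 \<le> n \<Longrightarrow> B \<subseteq> {1..n} \<Longrightarrow> (sig n ^^ t) B \<subseteq> {1..n}"
  using sig_sub[of n] by (induction t) auto

lemma sum_split_add: "(\<Sum>t<a + (b::nat). h t) = (\<Sum>t<a. h t) + (\<Sum>t<b. (h (a + t) :: real))"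
proof (induction b)
  case 0 then show ?case by simp
next
  case (Suc b) then show ?case by (simp add: add.assoc)
qed

lemma Pc_rev: assumes n: "1 \<le> n" shows "Pc n (Cl n (rev [1..<n + 1]))"
proof -
  define c where "c = Cl n (rev [1..<n + 1])"
  have cS: "\<forall>x\<in>S n. c x \<in> S n" unfolding c_def by (intro ballI Cl_in_S) auto
  have cA: "Aset n (c x) = sig n (Aset n x)" if "x \<in> S n" for x
    using Cl_rev_ystep[OF that] A_ystep[OF that n] unfolding c_def by simp
  have ct: "(c ^^ t) x \<in> S n \<and> Aset n ((c ^^ t) x) = (sig n ^^ t) (Aset n x)" if "x \<in> S n" for t x
    using that by (induction t) (auto simp: cS cA)
  have per: "\<forall>x\<in>S n. (c ^^ (2 * n)) x = x"
  proof
    fix x assume x: "x \<in> S n"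
    have AS: "Aset n x \<subseteq> {1..n}" using Aset_sub[OF x] .
    have "Aset n ((c ^^ (2 * n)) x) = (sig n ^^ (n + n)) (Aset n x)" using ct[OF x] by (simp add: mult_2)
    also have "\<dots> = (sig n ^^ n) ((sig n ^^ n) (Aset n x))" by (simp add: funpow_add)
    also have "\<dots> = Aset n x" using sig_n[OF AS] sig_n[of "{1..n} - Aset n x"] AS by auto
    finally show "(c ^^ (2 * n)) x = x" using Aset_inj ct[OF x] x by blast
  qed
  have sm: "\<forall>x\<in>S n. \<forall>j\<in>{1..n}. (\<Sum>t<2 * n. fj n j ((c ^^ t) x)) = real n"
  proof (intro ballI)
    fix x j assume x: "x \<in> S n" and j: "j \<in> {1..n}"
    define h where "h t = (of_bool (j \<in> (sig n ^^ t) (Aset n x)) :: real)" for t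
    have fh: "fj n j ((c ^^ t) x) = h t" for t using fj_Aset[of j n] j ct[OF x] by (simp add: h_def)
    have hn: "h (n + t) = 1 - h t" for t
    proof -
      have sub: "(sig n ^^ t) (Aset n x) \<subseteq> {1..n}" using sig_pow_sub[OF n Aset_sub[OF x]] .
      have "(sig n ^^ (n + t)) (Aset n x) = {1..n} - (sig n ^^ t) (Aset n x)"
        using sig_n[OF sub] by (simp add: funpow_add)
      then show ?thesis using j by (simp add: h_def)
    qed
    have "(\<Sum>t<2 * n. fj n j ((c ^^ t) x)) = (\<Sum>t<n + n. h t)" by (simp add: fh mult_2)
    also have "\<dots> = (\<Sum>t<n. h t) + (\<Sum>t<n. h (n + t))" by (rule sum_split_add)
    also have "\<dots> = (\<Sum>t<n. h t + h (n + t))" by (simp add: sum.distrib)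
    also have "\<dots> = (\<Sum>t<n. 1)" by (simp add: hn)
    finally show "(\<Sum>t<2 * n. fj n j ((c ^^ t) x)) = real n" by simp
  qed
  show ?thesis unfolding Pc_def c_def[symmetric] using cS per sm by blast
qed



fun bef :: "'a list \<Rightarrow> 'a \<Rightarrow> 'a \<Rightarrow> bool" where
  "bef [] a b = False"
| "bef (x # xs) a b = ((x = a \<and> b \<in> set xs) \<or> bef xs a b)"

lemma bef_append: "bef (xs @ ys) a b \<longleftrightarrow> bef xs a b \<or> bef ys a b \<or> (a \<in> set xs \<and> b \<in> set ys)"
  by (induction xs) auto

lemma bef_set: "bef xs a b \<Longrightarrow> a \<in> set xs \<and> b \<in> set xs"
  by (induction xs) auto

lemma bef_total: "a \<in> set xs \<Longrightarrow> b \<in> set xs \<Longrightarrow> a \<noteq> b \<Longrightarrow> bef xs a b \<or> bef xs b a"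
  by (induction xs) auto

lemma bef_asym: "distinct xs \<Longrightarrow> bef xs a b \<Longrightarrow> \<not> bef xs b a"
  by (induction xs) (auto dest: bef_set)

lemma bef_trans: "distinct xs \<Longrightarrow> bef xs a b \<Longrightarrow> bef xs b c \<Longrightarrow> bef xs a c"
  by (induction xs) (auto dest: bef_set)

lemma sorted_wrt_bef: "sorted_wrt P xs \<longleftrightarrow> (\<forall>a b. bef xs a b \<longrightarrow> P a b)"
  by (induction xs) auto

definition Dset :: "nat \<Rightarrow> nat list \<Rightarrow> nat set" where
  "Dset n L = {i. 1 \<le> i \<and> i < n \<and> bef L i (Suc i)}"

definition mu :: "nat \<Rightarrow> nat list \<Rightarrow> nat" where
  "mu n L = (\<Sum>i\<in>Dset n L. n - i)"

lemma Cl_append: "Cl n (xs @ ys) x = Cl n ys (Cl n xs x)"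
  by (simp add: Cl_def)

lemma empty_D_rev:
  assumes d: "distinct L" and s: "set L = {1..n}" and e: "Dset n L = {}"
  shows "L = rev [1..<n + 1]"
proof -
  have chain: "bef L (Suc i) i" if "1 \<le> i" "i < n" for i
  proof -
    have "\<not> bef L i (Suc i)" using e that by (auto simp: Dset_def)
    moreover have "i \<in> set L" "Suc i \<in> set L" using s that by auto
    moreover have "i \<noteq> Suc i" by simp
    ultimately show ?thesis using bef_total[of i L "Suc i"] by blast
  qed
  have desc: "1 \<le> a \<Longrightarrow> a + Suc k \<le> n \<Longrightarrow> bef L (a + Suc k) a" for a k
  proof (induction k)
    case 0 then show ?case using chain[of a] by simp
  next
    case (Suc k)
    have "bef L (a + Suc (Suc k)) (a + Suc k)" using chain[of "a + Suc k"] Suc.prems by simp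
    moreover have "bef L (a + Suc k) a" using Suc by simp
    ultimately show ?case using bef_trans[OF d] by blast
  qed
  have "sorted_wrt (>) L"
    unfolding sorted_wrt_bef
  proof (intro allI impI)
    fix a b assume ab: "bef L a b"
    have ne: "a \<noteq> b" using bef_asym[OF d ab] ab by auto
    have "a \<in> {1..n}" "b \<in> {1..n}" using bef_set[OF ab] s by auto
    show "b < a"
    proof (rule ccontr)
      assume "\<not> b < a"
      then have "a < b" using ne by auto
      then have "bef L (a + Suc (b - a - 1)) a" using desc[of a "b - a - 1"] \<open>a \<in> {1..n}\<close> \<open>b \<in> {1..n}\<close> by auto
      then have "bef L b a" using \<open>a < b\<close> by (simp add: Suc_diff_Suc)
      then show False using bef_asym[OF d ab] by simp
    qed
  qed
  then have "sorted_wrt (<) (rev L)" by (simp add: sorted_wrt_rev)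
  moreover have "sorted_wrt (<) [1..<n + 1]" by (rule sorted_wrt_upt)
  moreover have "set [1..<n + 1] = set (rev L)" using s by (simp only: set_rev set_upt Suc_eq_plus1[symmetric] atLeastLessThanSuc_atLeastAtMost)
  ultimately have "[1..<n + 1] = rev L" by (rule strict_sorted_equal)
  then show ?thesis by (metis rev_rev_ident)
qed



lemma list_main:
  assumes n: "1 \<le> n"
  shows "distinct L \<Longrightarrow> set L = {1..n} \<Longrightarrow> Pc n (Cl n L)"
proof (induction "mu n L" arbitrary: L rule: less_induct)
  case less
  note d = less.prems(1) and s = less.prems(2)
  show ?case
  proof (cases "Dset n L = {}")
    case True
    then have "L = rev [1..<n + 1]" using empty_D_rev d s by blast
    then show ?thesis using Pc_rev[OF n] by simp
  next
    case False
    define D where "D = Dset n L"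
    have fD: "finite D" unfolding D_def Dset_def by (rule finite_subset[of _ "{..<n}"]) auto
    have neD: "D \<noteq> {}" using False D_def by simp
    define i where "i = Max D"
    have iD: "i \<in> D" using Max_in[OF fD neD] i_def by simp
    have mx: "\<And>k. k \<in> D \<Longrightarrow> k \<le> i" using Max_ge[OF fD] i_def by simp
    define b where "b = Suc i"
    have i: "1 \<le> i" "i < n" "bef L i b" using iD by (auto simp: D_def Dset_def b_def)
    have bn: "b \<in> {1..n}" using i b_def by auto
    have bD: "b \<notin> D" using mx b_def by fastforce
    have bL: "b \<in> set L" using bn s by simp
    have nb: "b < n \<Longrightarrow> bef L (Suc b) b"
    proof -
      assume "b < n"
      then have "\<not> bef L b (Suc b)" using bD i b_def by (auto simp: D_def Dset_def)
      moreover have "Suc b \<in> set L" using \<open>b < n\<close> s by simp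
      moreover have "Suc b \<noteq> b" by simp
      ultimately show ?thesis using bef_total[of "Suc b" L b] bL by blast
    qed
    obtain p q where L: "L = p @ b # q" using split_list[OF bL] by blast
    have qc: "\<forall>c\<in>set q. c + 2 \<le> b \<or> b + 2 \<le> c"
    proof
      fix c assume c: "c \<in> set q"
      have bc: "bef L b c" using c L by (simp add: bef_append)
      have "c \<noteq> b" using d L c by auto
      moreover have "c \<noteq> i" using bc i(3) bef_asym[OF d] by blast
      moreover have "c \<noteq> Suc b"
      proof
        assume cb: "c = Suc b"
        then have "Suc b \<in> set L" using c L by simp
        then have "b < n" using s by simp
        then show False using nb bc cb bef_asym[OF d] by blast
      qed
      ultimately show "c + 2 \<le> b \<or> b + 2 \<le> c" using b_def by auto
    qed
    define M where "M = p @ q"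
    have CL: "Cl n L = Cl n (M @ [b])"
    proof
      fix x
      have "Cl n L x = Cl n (b # q) (Cl n p x)" unfolding L by (simp add: Cl_append)
      also have "\<dots> = Cl n (q @ [b]) (Cl n p x)" by (rule Cl_comm[OF qc])
      also have "\<dots> = Cl n (M @ [b]) x" unfolding M_def by (simp add: Cl_append)
      finally show "Cl n L x = Cl n (M @ [b]) x" .
    qed
    define L' where "L' = b # M"
    have dL': "distinct L'" using d L by (auto simp: L'_def M_def)
    have sL': "set L' = {1..n}" using s L by (auto simp: L'_def M_def)
    have bM: "b \<notin> set M" using d L by (auto simp: M_def)
    have sM: "set M \<subseteq> {1..n}" using s L by (auto simp: M_def)
    have same: "bef L' k (Suc k) \<longleftrightarrow> bef L k (Suc k)" if "k \<noteq> b" "Suc k \<noteq> b" for k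
      using that unfolding L L'_def M_def by (auto simp: bef_append)
    have ni: "\<not> bef L' i b" using bM bef_set[of M i b] by (auto simp: L'_def)
    have yb: "b < n \<Longrightarrow> bef L' b (Suc b)"
    proof -
      assume "b < n"
      then have "Suc b \<in> set L" using s by simp
      then have "Suc b \<in> set M" using L by (auto simp: M_def)
      then show ?thesis by (simp add: L'_def)
    qed
    have D': "Dset n L' = (if b < n then insert b (D - {i}) else D - {i})"
    proof (rule set_eqI)
      fix k
      show "k \<in> Dset n L' \<longleftrightarrow> k \<in> (if b < n then insert b (D - {i}) else D - {i})"
      proof (cases "k = b")
        case True then show ?thesis using yb bD i b_def by (auto simp: Dset_def)
      next
        case False
        show ?thesis
        proof (cases "k = i")
          case True then show ?thesis using ni b_def False by (auto simp: Dset_def)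
        next
          case False
          then have "Suc k \<noteq> b" using b_def by simp
          then show ?thesis using same[OF \<open>k \<noteq> b\<close>] False \<open>k \<noteq> b\<close> by (auto simp: Dset_def D_def)
        qed
      qed
    qed
    have le: "n - i \<le> mu n L" unfolding mu_def D_def[symmetric]
      using member_le_sum[of i D "\<lambda>k. n - k"] iD fD by auto
    have sd: "(\<Sum>k\<in>D - {i}. n - k) = mu n L - (n - i)"
      unfolding mu_def D_def[symmetric] using sum_diff1_nat[of "\<lambda>k. n - k" D i] iD by simp
    have "mu n L' < mu n L"
    proof (cases "b < n")
      case True
      have "mu n L' = (n - b) + (\<Sum>k\<in>D - {i}. n - k)"
        unfolding mu_def D' using True bD fD by (simp add: sum.insert)
      then show ?thesis using sd le i b_def by simp
    next
      case False
      have "mu n L' = (\<Sum>k\<in>D - {i}. n - k)" unfolding mu_def D' using False by simp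
      then show ?thesis using sd le i by simp
    qed
    then have "Pc n (Cl n L')" using less.hyps dL' sL' by blast
    then have "Pc n (Cl n (M @ [b]))" unfolding L'_def by (rule transfer[OF bn bM sM])
    then show ?thesis using CL by simp
  qed
qed



lemma orbit_avg_period:
  assumes per: "(c ^^ N) x = x" and N: "0 < N"
  shows "orbit_avg c f x = (\<Sum>t<N. f ((c ^^ t) x)) / real N"
proof -
  have ex: "\<exists>d. 0 < d \<and> (c ^^ d) x = x" using per N by blast
  define d where "d = (LEAST d. 0 < d \<and> (c ^^ d) x = x)"
  have d: "0 < d" "(c ^^ d) x = x" using LeastI_ex[OF ex] unfolding d_def[symmetric] by auto
  have dmin: "(c ^^ e) x \<noteq> x" if "0 < e" "e < d" for e
    using not_less_Least[of e "\<lambda>d. 0 < d \<and> (c ^^ d) x = x"] that unfolding d_def[symmetric] by auto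
  have mult: "(c ^^ (q * d)) x = x" for q
  proof (induction q)
    case 0 then show ?case by simp
  next
    case (Suc q)
    have "(c ^^ (Suc q * d)) x = (c ^^ d) ((c ^^ (q * d)) x)" by (simp add: funpow_add)
    then show ?case using Suc d by simp
  qed
  have modd: "(c ^^ k) x = (c ^^ (k mod d)) x" for k
  proof -
    have "(c ^^ k) x = (c ^^ (k mod d + (k div d) * d)) x" by simp
    also have "\<dots> = (c ^^ (k mod d)) ((c ^^ ((k div d) * d)) x)" by (simp only: funpow_add comp_apply)
    finally show ?thesis using mult by simp
  qed
  have orb: "orbit_of c x = (\<lambda>t. (c ^^ t) x) ` {..<d}"
  proof
    show "orbit_of c x \<subseteq> (\<lambda>t. (c ^^ t) x) ` {..<d}"
      unfolding orbit_of_def using modd d(1) by fastforce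
    show "(\<lambda>t. (c ^^ t) x) ` {..<d} \<subseteq> orbit_of c x"
      unfolding orbit_of_def by blast
  qed
  have inj1: "(c ^^ a) x \<noteq> (c ^^ b) x" if "a < b" "b < d" for a b
  proof
    assume e: "(c ^^ a) x = (c ^^ b) x"
    have "(c ^^ (d - b + a)) x = (c ^^ (d - b)) ((c ^^ a) x)" by (simp add: funpow_add)
    also have "\<dots> = (c ^^ (d - b)) ((c ^^ b) x)" using e by simp
    also have "\<dots> = (c ^^ (d - b + b)) x" by (simp add: funpow_add)
    also have "\<dots> = x" using that d by simp
    finally have "(c ^^ (d - b + a)) x = x" .
    moreover have "0 < d - b + a" "d - b + a < d" using that by auto
    ultimately show False using dmin by metis
  qed
  have inj: "inj_on (\<lambda>t. (c ^^ t) x) {..<d}"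
  proof (rule inj_onI)
    fix a b assume "a \<in> {..<d}" "b \<in> {..<d}" "(c ^^ a) x = (c ^^ b) x"
    then show "a = b" using inj1[of a b] inj1[of b a] by (cases a b rule: linorder_cases) auto
  qed
  have card: "card (orbit_of c x) = d" using orb inj by (simp add: card_image)
  have sumo: "(\<Sum>y\<in>orbit_of c x. f y) = (\<Sum>t<d. f ((c ^^ t) x))"
    using orb inj by (simp add: sum.reindex)
  have "N mod d = 0"
  proof (rule ccontr)
    assume "N mod d \<noteq> 0"
    moreover have "N mod d < d" using d by simp
    moreover have "(c ^^ (N mod d)) x = x" using modd[of N] per by simp
    ultimately show False using dmin by auto
  qed
  then obtain q where q: "N = q * d" by (metis dvd_def mod_eq_0_iff_dvd mult.commute)
  have qpos: "0 < q" using q N by (cases q) auto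
  have sq: "(\<Sum>t<q * d. f ((c ^^ t) x)) = real q * (\<Sum>t<d. f ((c ^^ t) x))" for q
  proof (induction q)
    case 0 then show ?case by simp
  next
    case (Suc q)
    have "(\<Sum>t<Suc q * d. f ((c ^^ t) x)) = (\<Sum>t<d + q * d. f ((c ^^ t) x))" by simp
    also have "\<dots> = (\<Sum>t<d. f ((c ^^ t) x)) + (\<Sum>t<q * d. f ((c ^^ (d + t)) x))"
      by (rule sum_split_add)
    also have "(\<Sum>t<q * d. f ((c ^^ (d + t)) x)) = (\<Sum>t<q * d. f ((c ^^ t) x))"
    proof (rule sum.cong[OF refl])
      fix t
      have "(c ^^ (d + t)) x = (c ^^ (t + d)) x" by (simp add: add.commute)
      also have "\<dots> = (c ^^ t) ((c ^^ d) x)" by (simp only: funpow_add comp_apply)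
      finally have "(c ^^ (d + t)) x = (c ^^ t) ((c ^^ d) x)" .
      then show "f ((c ^^ (d + t)) x) = f ((c ^^ t) x)" using d by simp
    qed
    finally show ?case using Suc by (simp add: algebra_simps)
  qed
  have "orbit_avg c f x = (\<Sum>t<d. f ((c ^^ t) x)) / real d"
    unfolding orbit_avg_def sumo card ..
  also have "\<dots> = (real q * (\<Sum>t<d. f ((c ^^ t) x))) / (real q * real d)"
    using qpos by simp
  also have "\<dots> = (\<Sum>t<N. f ((c ^^ t) x)) / real N" using sq[of q] q by simp
  finally show ?thesis .
qed

theorem mainTheorem9:
  fixes n :: nat and \<nu> :: "nat \<Rightarrow> nat"
  assumes "n \<ge> 1" and "\<nu> permutes {1..n}"
  shows "(\<forall>x\<in>S n. (WZperm n \<nu> ^^ (2 * n)) x = x)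
    \<and> (\<forall>j\<in>{1..n}. homomesic_with (S n) (WZperm n \<nu>) (fj n j) (1/2))
    \<and> (\<forall>a :: nat \<Rightarrow> real. homomesic (S n) (WZperm n \<nu>) (\<lambda>x. \<Sum>j=1..n. a j * fj n j x))"
proof -
  define L where "L = map \<nu> [1..<n + 1]"
  have WL: "WZperm n \<nu> = Cl n L"
    by (rule ext) (simp add: WZperm_def Cl_def L_def foldl_map)
  have e: "{1..<n + 1} = {1..n}" by auto
  have dL: "distinct L" unfolding L_def distinct_map
    by (rule conjI[OF distinct_upt permutes_inj_on[OF assms(2)]])
  have sL: "set L = {1..n}" unfolding L_def set_map set_upt e by (rule permutes_image[OF assms(2)])
  have P: "Pc n (WZperm n \<nu>)" unfolding WL by (rule list_main[OF assms(1) dL sL])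
  define c where "c = WZperm n \<nu>"
  have per: "\<forall>x\<in>S n. (c ^^ (2 * n)) x = x" and sm: "\<forall>x\<in>S n. \<forall>j\<in>{1..n}. (\<Sum>t<2 * n. fj n j ((c ^^ t) x)) = real n"
    using P unfolding Pc_def c_def by auto
  have N: "0 < 2 * n" using assms(1) by simp
  have avg: "orbit_avg c g x = (\<Sum>t<2 * n. g ((c ^^ t) x)) / real (2 * n)" if "x \<in> S n" for g x
  proof -
    have "(c ^^ (2 * n)) x = x" using per that by blast
    then show ?thesis by (rule orbit_avg_period[OF _ N])
  qed
  have part2: "\<forall>j\<in>{1..n}. homomesic_with (S n) c (fj n j) (1/2)"
    unfolding homomesic_with_def
  proof (intro ballI)
    fix j x assume j: "j \<in> {1..n}" and x: "x \<in> S n"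
    show "orbit_avg c (fj n j) x = 1 / 2" using avg[OF x] sm x j assms(1) by simp
  qed
  have part3: "homomesic (S n) c (\<lambda>x. \<Sum>j=1..n. a j * fj n j x)" for a :: "nat \<Rightarrow> real"
    unfolding homomesic_def homomesic_with_def
  proof (intro exI ballI)
    fix x assume x: "x \<in> S n"
    have "(\<Sum>t<2 * n. \<Sum>j=1..n. a j * fj n j ((c ^^ t) x)) = (\<Sum>j=1..n. a j * (\<Sum>t<2 * n. fj n j ((c ^^ t) x)))"
      unfolding sum_distrib_left by (rule sum.swap)
    also have "\<dots> = (\<Sum>j=1..n. a j * real n)" using sm x by simp
    finally have "orbit_avg c (\<lambda>x. \<Sum>j=1..n. a j * fj n j x) x = (\<Sum>j=1..n. a j * real n) / real (2 * n)"
      using avg[OF x] by simp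
    also have "\<dots> = (\<Sum>j=1..n. a j) * real n / (2 * real n)" by (simp add: sum_distrib_right)
    also have "\<dots> = (\<Sum>j=1..n. a j) / 2" using assms(1) by simp
    finally show "orbit_avg c (\<lambda>x. \<Sum>j=1..n. a j * fj n j x) x = (\<Sum>j=1..n. a j) / 2" .
  qed
  show ?thesis using per part2 part3 unfolding c_def by blast
qed


end
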